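(* Let $\mathcal{S}:\mathbb{Z}\to\{L,R\}$ be a periodic symbol sequence of period $n$ with $\mathcal{S}_0=L$, and suppose $\mathcal{S}^{\overline0\,\overline\alpha\,(d)}=\mathcal{S}$ for some $1\le\alpha\le n-1$ and $1\le d\le n-1$ with $\gcd(d,n)=1$. Let $m$ denote the multiplicative inverse of $d$ modulo $n$, and $\ell=m\alpha\bmod n$. Then $\mathcal{S}=\mathcal{F}[\ell,m,n]$ and $\alpha=\ell d\bmod n$.
   Context: For a sequence $\mathcal{S}$ of period $n$: $\mathcal{S}^{\overline j}$ is the sequence differing from $\mathcal{S}$ exactly at indices $\equiv j\pmod n$, and $\mathcal{S}^{(j)}$ is the $j$-th left shift, $\mathcal{S}^{(j)}_i=\mathcal{S}_{i+j}$; superscript operations are applied left to right (so $\mathcal{S}^{\overline0\,\overline\alpha\,(d)}$ is the $d$-th left shift of the sequence obtained from $\mathcal{S}$ by changing the symbols at indices $\equiv0$ and $\equiv\alpha$). For positive integers $\ell<n$, $m<n$, $\gcd(m,n)=1$, $\mathcal{F}[\ell,m,n]_i=L$ if $im\bmod n<\ell$ and $R$ otherwise. *)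

theory Defs
  imports "HOL-Number_Theory.Number_Theory"
begin

datatype sym = L | R

fun other :: "sym \<Rightarrow> sym" where
  "other L = R" | "other R = L"

type_synonym symseq = "int \<Rightarrow> sym"

definition periodic_seq :: "nat \<Rightarrow> symseq \<Rightarrow> bool" where
  "periodic_seq n S \<longleftrightarrow> (\<forall>i. S (i + int n) = S i)"

text \<open>S^{overline j}: change the symbol at exactly the indices congruent to j mod n.\<close>
definition flip_at :: "nat \<Rightarrow> int \<Rightarrow> symseq \<Rightarrow> symseq" where
  "flip_at n j S = (\<lambda>i. if i mod int n = j mod int n then other (S i) else S i)"

text \<open>S^{(j)}: the j-th left shift.\<close>
definition lshift :: "int \<Rightarrow> symseq \<Rightarrow> symseq" where
  "lshift j S = (\<lambda>i. S (i + j))"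

definition F_seq :: "nat \<Rightarrow> nat \<Rightarrow> nat \<Rightarrow> symseq" where
  "F_seq l m n = (\<lambda>i. if (i * int m) mod int n < int l then L else R)"

end

theory Submission
  imports Defs
begin

lemma per_mod:
  assumes per: "periodic_seq n S"
  shows "S i = S (i mod int n)"
proof -
  have step: "S (x + int n * c) = S x" for x c
  proof (induction c rule: int_induct[where k=0])
    case base then show ?case by simp
  next
    case (step1 c) then show ?case using per unfolding periodic_seq_def
      by (metis add.assoc distrib_left mult.right_neutral)
  next
    case (step2 c)
    have "S (x + int n * (c - 1) + int n) = S (x + int n * (c - 1))"
      using per unfolding periodic_seq_def by blast
    moreover have "x + int n * (c - 1) + int n = x + int n * c" by (simp add: algebra_simps)
    ultimately show ?case using step2 by simp
  qed
  have "i = i mod int n + int n * (i div int n)" by simp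
  then show ?thesis using step by metis
qed

lemma other_other[simp]: "other (other x) = x" by (cases x) auto
lemma other_L[simp]: "(other x = L) = (x = R)" by (cases x) auto
lemma other_R[simp]: "(other x = R) = (x = L)" by (cases x) auto

theorem proposition5p1:
  fixes S :: symseq and n \<alpha> d m :: nat
  assumes per: "periodic_seq n S"
    and S0: "S 0 = L"
    and alpha: "1 \<le> \<alpha>" "\<alpha> \<le> n - 1"
    and d: "1 \<le> d" "d \<le> n - 1" "gcd d n = 1"
    and fix_eq: "lshift (int d) (flip_at n (int \<alpha>) (flip_at n 0 S)) = S"
    and m_inv: "m < n" "[d * m = 1] (mod n)"
  shows "S = F_seq ((m * \<alpha>) mod n) m n \<and> \<alpha> = (((m * \<alpha>) mod n) * d) mod n"
proof -
  define l where "l = (m * \<alpha>) mod n"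
  define N where "N = int n"
  define D where "D = int d"
  define M where "M = int m"
  have n2: "n \<ge> 2" using alpha by linarith
  have Npos: "N > 0" using n2 N_def by simp
  have DM: "(D * M) mod N = 1" using m_inv n2 unfolding D_def M_def N_def
    by (metis cong_def of_nat_1 of_nat_mod of_nat_mult mod_less one_less_numeral_iff
        semiring_norm(76) less_le_trans numeral_le_iff order_less_le_trans
        one_less_numeral_iff le_less_trans)
  have lz: "int l = (M * int \<alpha>) mod N" unfolding l_def M_def N_def by (simp add: of_nat_mod)
  have alphaN: "int \<alpha> mod N = int \<alpha>" using alpha n2 N_def by simp
  have key: "S i = (if (i + D) mod N = 0 \<or> (i + D) mod N = int \<alpha> then other (S (i + D)) else S (i + D))" for i
  proof -
    have "S i = lshift (int d) (flip_at n (int \<alpha>) (flip_at n 0 S)) i" using fix_eq by simp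
    then show ?thesis unfolding lshift_def flip_at_def D_def N_def using alphaN N_def alpha(1)
      by (auto split: if_splits)
  qed
  have eqa: "((k+1) * D) mod N = int \<alpha> \<longleftrightarrow> (k+1) mod N = int l" for k :: int
  proof
    assume h: "((k+1) * D) mod N = int \<alpha>"
    have "((k+1) * D * M) mod N = (int \<alpha> * M) mod N"
      using h by (metis mod_mult_left_eq)
    moreover have "((k+1) * D * M) mod N = (k+1) mod N"
      using DM by (metis mod_mult_right_eq mult.assoc mult.right_neutral)
    ultimately show "(k+1) mod N = int l" using lz by (simp add: mult.commute)
  next
    assume h: "(k+1) mod N = int l"
    have "((k+1) * D) mod N = (M * int \<alpha> * D) mod N"
      using h lz by (metis mod_mult_left_eq)
    also have "\<dots> = (int \<alpha> * (D * M)) mod N" by (simp add: algebra_simps)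
    also have "\<dots> = int \<alpha> mod N" using DM by (metis mod_mult_right_eq mult.right_neutral)
    finally show "((k+1) * D) mod N = int \<alpha>" using alphaN by simp
  qed
  have eq0: "((k+1) * D) mod N = 0 \<longleftrightarrow> (k+1) mod N = 0" for k :: int
  proof
    assume h: "((k+1) * D) mod N = 0"
    have "((k+1) * D * M) mod N = 0" using h by (metis mod_mult_left_eq mult_zero_left mod_0)
    moreover have "((k+1) * D * M) mod N = (k+1) mod N"
      using DM by (metis mod_mult_right_eq mult.assoc mult.right_neutral)
    ultimately show "(k+1) mod N = 0" by simp
  next
    assume "(k+1) mod N = 0" then show "((k+1) * D) mod N = 0" by (metis mod_mult_left_eq mult_zero_left mod_0)
  qed
  have lpos: "l > 0"
  proof (rule ccontr)
    assume "\<not> l > 0" then have "int l = 0" by simp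
    then have "((0 - 1 + 1) * D) mod N = int \<alpha>" using eqa[of "-1"] by simp
    then show False using alpha by simp
  qed
  have lN: "int l < N" unfolding l_def N_def using n2 by simp
  have orb: "S (int k * D) = (if int k mod N < int l then L else R)" for k :: nat
  proof (induction k)
    case 0 then show ?case using S0 lpos by simp
  next
    case (Suc k)
    define j where "j = (int k + 1) mod N"
    have kj: "int k mod N = (if j = 0 then N - 1 else j - 1)"
    proof -
      define r where "r = int k mod N"
      have r: "0 \<le> r" "r < N" unfolding r_def using Npos by auto
      have "(int k + 1) mod N = (r + 1) mod N" unfolding r_def by (simp add: mod_add_left_eq)
      then show ?thesis
      proof (cases "r + 1 < N")
        case True then show ?thesis using r \<open>(int k + 1) mod N = (r + 1) mod N\<close> unfolding j_def r_def[symmetric] by simp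
      next
        case False then have "r + 1 = N" using r by simp
        then show ?thesis using r \<open>(int k + 1) mod N = (r + 1) mod N\<close> unfolding j_def r_def[symmetric] by simp
      qed
    qed
    have kS: "S (int k * D) = (if (int k * D + D) mod N = 0 \<or> (int k * D + D) mod N = int \<alpha>
        then other (S (int k * D + D)) else S (int k * D + D))" using key by blast
    have e: "int k * D + D = (int k + 1) * D" by (simp add: algebra_simps)
    have jr: "0 \<le> j" "j < N" unfolding j_def using Npos by auto
    have c0: "(int k * D + D) mod N = 0 \<longleftrightarrow> j = 0" using eq0[of "int k"] e j_def by simp
    have ca: "(int k * D + D) mod N = int \<alpha> \<longleftrightarrow> j = int l" using eqa[of "int k"] e j_def by simp
    have js: "int (Suc k) mod N = j" unfolding j_def by (simp add: add.commute)
    have jl: "j = 0 \<Longrightarrow> j \<noteq> int l" using lpos by simp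
    have A: "S (int k * D) = (if j = 0 \<or> j = int l then other (S ((int k + 1) * D)) else S ((int k + 1) * D))"
      using kS c0 ca e by simp
    have B: "S (int k * D) = (if (if j = 0 then N - 1 else j - 1) < int l then L else R)"
      using Suc.IH kj by simp
    have C: "S ((int k + 1) * D) = (if j < int l then L else R)"
      using A B jr lpos lN
      by (cases "j = 0"; cases "j = int l"; cases "S ((int k + 1) * D)") (auto split: if_splits)
    have g: "int (Suc k) * D = (int k + 1) * D" by simp
    show ?case using C js g by (simp add: add.commute)
  qed
  have Sall: "S i = F_seq l m n i" for i
  proof -
    define k where "k = nat ((i * M) mod N)"
    have k: "int k = (i * M) mod N" unfolding k_def using Npos by simp
    have "(int k * D) mod N = (i * (D * M)) mod N" using k
      by (metis mod_mult_left_eq mult.assoc mult.commute)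
    also have "\<dots> = i mod N" using DM by (metis mod_mult_right_eq mult.right_neutral)
    finally have "S i = S (int k * D)" using per_mod[OF per] N_def by metis
    also have "\<dots> = (if int k mod N < int l then L else R)" by (rule orb)
    also have "\<dots> = F_seq l m n i" unfolding F_seq_def using k Npos N_def M_def
      by simp
    finally show ?thesis .
  qed
  have "int ((l * d) mod n) = int \<alpha>"
  proof -
    have "int ((l * d) mod n) = ((int l) * D) mod N" unfolding D_def N_def by (simp add: of_nat_mod)
    also have "\<dots> = int \<alpha>" using eqa[of "int l - 1"] lN lpos Npos by simp
    finally show ?thesis .
  qed
  then show ?thesis using Sall l_def by auto
qed

end
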